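(* Let $W:\mathbb{T}\to(-\infty,\infty]$ satisfy (H1)–(H4) and let $U$ be a function on $\mathbb{T}$ bounded from below. Let $\rho$ be a Borel probability measure on $\mathbb{T}$, $x_0\in\mathbb{T}$, $0<\epsilon<1/2$. Suppose there is $c>0$ with $V_U[\rho](x)\ge\operatorname{ess\,inf}V_U[\rho]+c$ (the left side possibly $+\infty$) for all $x\in[x_0-\epsilon,x_0+\epsilon]$, and $\operatorname{supp}\rho\cap(x_0-\epsilon/2,x_0+\epsilon/2)\ne\emptyset$. Define $$\rho_\lambda=\rho+\lambda\big(m_1\delta_{x_0-\epsilon}+m_2\delta_{x_0+\epsilon}-\rho|_{(x_0-\epsilon,x_0+\epsilon)}\big),$$ where $m_1,m_2>0$ are determined by the moment conditions $\int_{(-\epsilon,\epsilon)}u^k\,d\big(m_1\delta_{-\epsilon}+m_2\delta_{\epsilon}-\tau\big)(u)=0$ for $k=0,1$, with $\tau$ the translate of $\rho|_{(x_0-\epsilon,x_0+\epsilon)}$ by $-x_0$ (viewed on the real interval $(-\epsilon,\epsilon)$). Then for all sufficiently small $\lambda>0$, $\rho_\lambda$ is a probability measure and $$-\operatorname{ess\,inf}V_U[\rho_\lambda]<-\operatorname{ess\,inf}V_U[\rho].$$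
   Context: $\mathbb{T}=\mathbb{R}/\mathbb{Z}$. Hypotheses: (H1) $W\in L^1(\mathbb{T})\cap C^2(\mathbb{T}\setminus\{0\})$, $\int_{\mathbb{T}}W=0$; (H2) $W$ even; (H3) $\lim_{x\to0}W(x)=W(0)=\infty$; (H4) $W''\ge C_1>0$ on $\mathbb{T}\setminus\{0\}$. $V_U[\rho]=U+W*\rho$ with $(W*\rho)(x)=\int W(x-y)\,d\rho(y)$; essential infima are with respect to Lebesgue measure; $\rho|_A$ denotes restriction of $\rho$ to $A$. *)

theory Defs
  imports "HOL-Probability.Probability"
begin

text \<open>The torus T = R/Z is modelled by 1-periodic functions on the reals; a Borel
  measure on T is a Borel measure on the reals concentrated on [0,1).\<close>

definition isTprob :: "real measure \<Rightarrow> bool" where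
  "isTprob \<mu> \<longleftrightarrow> prob_space \<mu> \<and> sets \<mu> = sets borel \<and> emeasure \<mu> (UNIV - {0..<1}) = 0"

text \<open>Representative in [-1/2,1/2] of y - x0 on the circle.\<close>
definition liftT :: "real \<Rightarrow> real \<Rightarrow> real" where
  "liftT x0 y = y - x0 - of_int (round (y - x0))"

definition Wbar :: "(real \<Rightarrow> real) \<Rightarrow> real \<Rightarrow> ereal" where
  "Wbar W x = (if x \<in> \<int> then \<infinity> else ereal (W x))"

text \<open>(W * rho)(x) = int W(x-y) d rho(y), as an extended integral
  (positive part minus negative part).\<close>
definition convT :: "(real \<Rightarrow> real) \<Rightarrow> real measure \<Rightarrow> real \<Rightarrow> ereal" where
  "convT W \<rho> x =
     enn2ereal (\<integral>\<^sup>+ y. e2ennreal (max 0 (Wbar W (x - y))) \<partial>\<rho>)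
   - enn2ereal (\<integral>\<^sup>+ y. e2ennreal (max 0 (- Wbar W (x - y))) \<partial>\<rho>)"

definition VU :: "(real \<Rightarrow> real) \<Rightarrow> (real \<Rightarrow> real) \<Rightarrow> real measure \<Rightarrow> real \<Rightarrow> ereal" where
  "VU U W \<rho> x = ereal (U x) + convT W \<rho> x"

text \<open>Essential infimum w.r.t. Lebesgue measure on T (periodic functions, so over [0,1]).\<close>
definition essinfT :: "(real \<Rightarrow> ereal) \<Rightarrow> ereal" where
  "essinfT f = Sup {z. AE x in lborel. x \<in> {0..1} \<longrightarrow> z \<le> f x}"

definition suppT :: "real measure \<Rightarrow> real set" where
  "suppT \<rho> = {x. \<forall>r>0. emeasure \<rho> {y. \<bar>liftT x y\<bar> < r} > 0}"

definition arcT :: "real \<Rightarrow> real \<Rightarrow> real set" where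
  "arcT x0 \<epsilon> = {y \<in> {0..<1}. \<bar>liftT x0 y\<bar> < \<epsilon>}"

definition restrT :: "real measure \<Rightarrow> real \<Rightarrow> real \<Rightarrow> real measure" where
  "restrT \<rho> x0 \<epsilon> = density \<rho> (indicator (arcT x0 \<epsilon>))"

definition tauT :: "real measure \<Rightarrow> real \<Rightarrow> real \<Rightarrow> real measure" where
  "tauT \<rho> x0 \<epsilon> = distr (restrT \<rho> x0 \<epsilon>) lborel (liftT x0)"

text \<open>rho_lambda as a (signed) set function on Borel sets of T.\<close>
definition rhoLam :: "real measure \<Rightarrow> real \<Rightarrow> real \<Rightarrow> real \<Rightarrow> real \<Rightarrow> real \<Rightarrow> real set \<Rightarrow> real" where
  "rhoLam \<rho> x0 \<epsilon> m1 m2 lam B =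
     measure \<rho> B + lam * (m1 * indicator B (frac (x0 - \<epsilon>)) + m2 * indicator B (frac (x0 + \<epsilon>))
                         - measure (restrT \<rho> x0 \<epsilon>) B)"

end

theory Submission
  imports Defs
begin

lemma convex_from_second:
  fixes g g' g'' :: "real \<Rightarrow> real" and a b :: real
  assumes "\<And>u. u \<in> {a..b} \<Longrightarrow> (g has_real_derivative g' u) (at u)"
    and "\<And>u. u \<in> {a..b} \<Longrightarrow> (g' has_real_derivative g'' u) (at u)"
    and "\<And>u. u \<in> {a..b} \<Longrightarrow> g'' u \<ge> 0"
  shows "convex_on {a..b} g"
proof (rule convex_on_realI[where f'=g'])
  show "connected {a..b}" by simp
  show "\<And>x. x \<in> {a..b} \<Longrightarrow> (g has_real_derivative g' x) (at x)" using assms(1) by blast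
  fix x y assume xy: "x \<in> {a..b}" "y \<in> {a..b}" "x \<le> y"
  show "g' x \<le> g' y"
    by (rule DERIV_nonneg_imp_nondecreasing[OF xy(3)]) (use xy assms(2,3) in \<open>meson atLeastAtMost_iff order_trans\<close>)
qed

lemma chord_bound:
  fixes h h' h'' :: "real \<Rightarrow> real" and a b C u :: real
  assumes ab: "a < b"
    and d1: "\<And>u. u \<in> {a..b} \<Longrightarrow> (h has_real_derivative h' u) (at u)"
    and d2: "\<And>u. u \<in> {a..b} \<Longrightarrow> (h' has_real_derivative h'' u) (at u)"
    and hC: "\<And>u. u \<in> {a..b} \<Longrightarrow> h'' u \<ge> C"
    and u: "u \<in> {a..b}"
  shows "h u \<le> ((b - u) * h a + (u - a) * h b) / (b - a) - C / 2 * ((u - a) * (b - u))"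
proof -
  define g where "g = (\<lambda>v. h v - C / 2 * v\<^sup>2)"
  have cg: "convex_on {a..b} g"
  proof (rule convex_from_second[where g'="\<lambda>v. h' v - C * v" and g''="\<lambda>v. h'' v - C"])
    fix v assume v: "v \<in> {a..b}"
    show "(g has_real_derivative h' v - C * v) (at v)"
      unfolding g_def using d1[OF v] by (auto intro!: derivative_eq_intros)
    show "((\<lambda>v. h' v - C * v) has_real_derivative h'' v - C) (at v)"
      using d2[OF v] by (auto intro!: derivative_eq_intros)
    show "0 \<le> h'' v - C" using hC[OF v] by simp
  qed
  define t where "t = (u - a) / (b - a)"
  have t: "0 \<le> t" "t \<le> 1" using u ab by (auto simp: t_def field_simps)
  have ueq: "u = (1 - t) *\<^sub>R a + t *\<^sub>R b"
  proof -
    have "(1 - t) * a + t * b = a + t * (b - a)" by (simp add: algebra_simps)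
    also have "\<dots> = u" using ab by (simp add: t_def)
    finally show ?thesis by simp
  qed
  have "g u \<le> (1 - t) * g a + t * g b"
    using convex_onD[OF cg t] ab ueq by (metis atLeastAtMost_iff order_refl less_imp_le)
  then have g1: "h u - C / 2 * u\<^sup>2 \<le> (1 - t) * (h a - C / 2 * a\<^sup>2) + t * (h b - C / 2 * b\<^sup>2)"
    by (simp add: g_def)
  have ur: "u = (1 - t) * a + t * b" using ueq by simp
  have id1: "(1 - t) * a\<^sup>2 + t * b\<^sup>2 - u\<^sup>2 = (u - a) * (b - u)"
    unfolding ur by (simp add: algebra_simps power2_eq_square)
  have id2: "((b - u) * h a + (u - a) * h b) / (b - a) = (1 - t) * h a + t * h b"
  proof -
    have "1 - t = (b - u) / (b - a)" using ab by (simp add: t_def field_simps)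
    then have "(1 - t) * h a + t * h b = (b - u) / (b - a) * h a + (u - a) / (b - a) * h b"
      by (simp add: t_def)
    then show ?thesis by (simp add: add_divide_distrib)
  qed
  have "h u \<le> (1 - t) * h a + t * h b - C / 2 * ((1 - t) * a\<^sup>2 + t * b\<^sup>2 - u\<^sup>2)"
    using g1 by (simp add: algebra_simps diff_divide_distrib)
  then show ?thesis using id1 id2 by simp
qed

lemma W_int_per:
  fixes W :: "real \<Rightarrow> real"
  assumes W_per: "\<forall>x. W (x + 1) = W x"
  shows "W (x + of_int k) = W x"
proof -
  have pos: "W (x + of_nat n) = W x" for x n
  proof (induction n arbitrary: x)
    case 0 then show ?case by simp
  next
    case (Suc n)
    have "x + of_nat (Suc n) = (x + of_nat n) + 1" by simp
    then have "W (x + of_nat (Suc n)) = W ((x + of_nat n) + 1)" by (rule arg_cong)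
    also have "\<dots> = W (x + of_nat n)" using W_per by blast
    finally show ?case using Suc by simp
  qed
  show ?thesis
  proof (cases "k \<ge> 0")
    case True
    then show ?thesis using pos[of x "nat k"] by simp
  next
    case False
    then have "W (x + of_int k + of_nat (nat (-k))) = W (x + of_int k)" using pos by blast
    then show ?thesis using False by simp
  qed
qed

lemma W_meas:
  fixes W W' :: "real \<Rightarrow> real"
  assumes "\<forall>x. x \<notin> \<int> \<longrightarrow> (W has_real_derivative W' x) (at x)"
  shows "W \<in> borel_measurable borel"
proof (rule borel_measurable_continuous_countable_exceptions[OF countable_int])
  show "continuous_on (- \<int>) W"
    using assms by (intro continuous_at_imp_continuous_on) (auto intro: DERIV_isCont)
qed

lemma Wbar_meas:
  fixes W :: "real \<Rightarrow> real"
  assumes "W \<in> borel_measurable borel"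
  shows "Wbar W \<in> borel_measurable borel"
proof -
  have "\<int> \<in> sets (borel :: real measure)" by (simp add: closed_Ints)
  then show ?thesis unfolding Wbar_def[abs_def] using assms by measurable
qed

lemma Wbar_per:
  fixes W :: "real \<Rightarrow> real"
  assumes W_per: "\<forall>x. W (x + 1) = W x"
  shows "Wbar W (x + of_int k) = Wbar W x"
proof -
  have "x + of_int k \<in> \<int> \<longleftrightarrow> x \<in> \<int>"
  proof
    assume "x + of_int k \<in> \<int>"
    then have "x + of_int k - of_int k \<in> \<int>" by (intro Ints_diff) auto
    then show "x \<in> \<int>" by simp
  qed (auto intro: Ints_add)
  then show ?thesis unfolding Wbar_def using W_int_per[OF W_per] by simp
qed

lemma W_lower:
  fixes W W' W'' :: "real \<Rightarrow> real"
  assumes W_per: "\<forall>x. W (x + 1) = W x"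
    and D: "\<forall>x. x \<notin> \<int> \<longrightarrow> (W has_real_derivative W' x) (at x) \<and> (W' has_real_derivative W'' x) (at x) \<and> W'' x \<ge> 0"
  shows "\<exists>B\<ge>0. \<forall>t. t \<notin> \<int> \<longrightarrow> W t \<ge> - B"
proof -
  have nz: "s \<notin> \<int>" if "s \<in> {0<..<1}" for s :: real
  proof
    assume "s \<in> \<int>" then obtain n where "s = of_int n" by (auto elim: Ints_cases)
    with that show False by auto
  qed
  have cv: "convex_on {0<..<1} W"
  proof (rule convex_on_realI[where f'=W'])
    show "connected {0<..<1::real}" by simp
    show "\<And>x. x \<in> {0<..<1} \<Longrightarrow> (W has_real_derivative W' x) (at x)" using D nz by blast
    fix x y :: real assume xy: "x \<in> {0<..<1}" "y \<in> {0<..<1}" "x \<le> y"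
    show "W' x \<le> W' y"
    proof (rule DERIV_nonneg_imp_nondecreasing[OF xy(3)])
      fix z assume "x \<le> z" "z \<le> y"
      then have "z \<in> {0<..<1}" using xy by auto
      then show "\<exists>y. (W' has_real_derivative y) (at z) \<and> 0 \<le> y" using D nz by blast
    qed
  qed
  define B where "B = \<bar>W (1/2)\<bar> + \<bar>W' (1/2)\<bar>"
  have main: "W s \<ge> - B" if s: "s \<in> {0<..<1}" for s
  proof -
    have "W s - W (1/2) \<ge> W' (1/2) * (s - 1/2)"
    proof (rule convex_on_imp_above_tangent[OF cv])
      show "connected {0<..<1::real}" by simp
      show "1/2 \<in> interior {0<..<1::real}" by simp
      show "s \<in> {0<..<1}" by fact
      have "(W has_real_derivative W' (1/2)) (at (1/2))" using D nz[of "1/2"] by auto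
      then show "(W has_real_derivative W' (1/2)) (at (1/2) within {0<..<1})"
        by (rule has_field_derivative_at_within)
    qed
    moreover have "\<bar>W' (1/2) * (s - 1/2)\<bar> \<le> \<bar>W' (1/2)\<bar>"
      using s by (auto simp: abs_mult intro!: mult_left_le)
    ultimately show ?thesis unfolding B_def by linarith
  qed
  show ?thesis
  proof (intro exI[of _ B] conjI allI impI)
    show "0 \<le> B" by (simp add: B_def)
    fix t :: real assume t: "t \<notin> \<int>"
    have "frac t \<noteq> 0" using t by (simp add: frac_eq_0_iff)
    then have "frac t \<in> {0<..<1}" using frac_lt_1[of t] frac_ge_0[of t] by auto
    moreover have "W t = W (frac t)"
      using W_int_per[OF W_per, of "frac t" "floor t"] by (simp add: frac_def)
    ultimately show "W t \<ge> - B" using main by simp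
  qed
qed

definition msum :: "'a measure \<Rightarrow> 'a measure \<Rightarrow> 'a measure" where
  "msum M N = measure_of (space M) (sets M) (\<lambda>A. emeasure M A + emeasure N A)"

lemma sets_msum [simp, measurable_cong]: "sets (msum M N) = sets M"
  unfolding msum_def by (simp add: sets.sigma_sets_eq sets.space_closed)

lemma space_msum [simp]: "space (msum M N) = space M"
  unfolding msum_def by (simp add: sets.space_closed)

lemma emeasure_msum:
  assumes sN: "sets N = sets M" and A: "A \<in> sets M"
  shows "emeasure (msum M N) A = emeasure M A + emeasure N A"
  unfolding msum_def
proof (rule emeasure_measure_of_sigma[OF _ _ _ A])
  show "sigma_algebra (space M) (sets M)" by (rule sets.sigma_algebra_axioms)
  show "positive (sets M) (\<lambda>A. emeasure M A + emeasure N A)"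
    by (simp add: positive_def)
  show "countably_additive (sets M) (\<lambda>A. emeasure M A + emeasure N A)"
  proof (rule countably_additiveI)
    fix F :: "nat \<Rightarrow> _" assume F: "range F \<subseteq> sets M" "disjoint_family F" "\<Union> (range F) \<in> sets M"
    have "(\<Sum>i. emeasure M (F i) + emeasure N (F i)) = (\<Sum>i. emeasure M (F i)) + (\<Sum>i. emeasure N (F i))"
      by (rule suminf_add[symmetric]) auto
    also have "\<dots> = emeasure M (\<Union> (range F)) + emeasure N (\<Union> (range F))"
      using F sN by (simp add: suminf_emeasure)
    finally show "(\<Sum>i. emeasure M (F i) + emeasure N (F i)) = emeasure M (\<Union> (range F)) + emeasure N (\<Union> (range F))" .
  qed
qed

lemma nn_integral_msum:
  assumes sN: "sets N = sets M" and f: "f \<in> borel_measurable M"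
  shows "(\<integral>\<^sup>+ x. f x \<partial>msum M N) = (\<integral>\<^sup>+ x. f x \<partial>M) + (\<integral>\<^sup>+ x. f x \<partial>N)"
proof -
  have eqN: "borel_measurable N = borel_measurable M" by (rule measurable_cong_sets[OF sN refl])
  have eqS: "borel_measurable (msum M N) = borel_measurable M" by (rule measurable_cong_sets[OF sets_msum refl])
  show ?thesis
  using f
proof (induction rule: borel_measurable_induct)
  case (cong f g)
  have sp: "space N = space M" using sN by (rule sets_eq_imp_space_eq)
  have "(\<integral>\<^sup>+ x. f x \<partial>msum M N) = (\<integral>\<^sup>+ x. g x \<partial>msum M N)"
    using cong by (intro nn_integral_cong) simp
  moreover have "(\<integral>\<^sup>+ x. f x \<partial>M) = (\<integral>\<^sup>+ x. g x \<partial>M)"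
    using cong by (intro nn_integral_cong) simp
  moreover have "(\<integral>\<^sup>+ x. f x \<partial>N) = (\<integral>\<^sup>+ x. g x \<partial>N)"
    using cong sp by (intro nn_integral_cong) simp
  ultimately show ?case using cong by simp
next
  case (set A)
  have AN: "A \<in> sets N" using set sN by blast
  have AS: "A \<in> sets (msum M N)" using set by (simp only: sets_msum)
  show ?case
    using emeasure_msum[OF sN set] nn_integral_indicator[OF AS] nn_integral_indicator[OF AN] nn_integral_indicator[OF set]
    by argo
next
  case (mult u c)
  have mN: "u \<in> borel_measurable N" unfolding eqN using mult by blast
  have mS: "u \<in> borel_measurable (msum M N)" unfolding eqS using mult by blast
  show ?case using mult mN mS by (simp add: nn_integral_cmult distrib_left)
next
  case (add u v)
  have mN: "u \<in> borel_measurable N" "v \<in> borel_measurable N" unfolding eqN using add by blast+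
  have mS: "u \<in> borel_measurable (msum M N)" "v \<in> borel_measurable (msum M N)" unfolding eqS using add by blast+
  show ?case using add mN mS by (simp add: nn_integral_add algebra_simps)
next
  case (seq U)
  have inc: "incseq U" using seq by blast
  have mM: "\<And>i. U i \<in> borel_measurable M" using seq by blast
  have IH: "\<And>i. integral\<^sup>N (msum M N) (U i) = integral\<^sup>N M (U i) + integral\<^sup>N N (U i)" using seq by blast
  have mN: "\<And>i. U i \<in> borel_measurable N" unfolding eqN using seq by blast
  have mS: "\<And>i. U i \<in> borel_measurable (msum M N)" unfolding eqS using seq by blast
  have "(\<integral>\<^sup>+ x. (SUP i. U i) x \<partial>msum M N) = (SUP i. integral\<^sup>N (msum M N) (U i))"
    unfolding SUP_apply by (rule nn_integral_monotone_convergence_SUP[OF inc mS])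
  also have "\<dots> = (SUP i. integral\<^sup>N M (U i) + integral\<^sup>N N (U i))"
    using IH by simp
  also have "\<dots> = (SUP i. integral\<^sup>N M (U i)) + (SUP i. integral\<^sup>N N (U i))"
  proof (rule ennreal_SUP_add)
    show "incseq (\<lambda>i. integral\<^sup>N M (U i))"
      using inc by (auto simp: incseq_def le_fun_def intro!: nn_integral_mono)
    show "incseq (\<lambda>i. integral\<^sup>N N (U i))"
      using inc by (auto simp: incseq_def le_fun_def intro!: nn_integral_mono)
  qed
  also have "\<dots> = (\<integral>\<^sup>+ x. (SUP i. U i) x \<partial>M) + (\<integral>\<^sup>+ x. (SUP i. U i) x \<partial>N)"
    unfolding SUP_apply
    by (simp add: nn_integral_monotone_convergence_SUP[OF inc mM] nn_integral_monotone_convergence_SUP[OF inc mN])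
  finally show ?case .
qed
qed

lemma conv_shift:
  fixes W :: "real \<Rightarrow> real" and M :: "real measure" and Bw x :: real
  assumes P: "prob_space M" and sM: "sets M = sets borel"
    and Wm: "Wbar W \<in> borel_measurable borel"
    and Bw: "0 \<le> Bw" "\<forall>t. t \<notin> \<int> \<longrightarrow> W t \<ge> - Bw"
  shows "convT W M x = enn2ereal (\<integral>\<^sup>+ y. e2ennreal (Wbar W (x - y) + ereal Bw) \<partial>M) - ereal Bw"
proof -
  interpret prob_space M by (rule P)
  define p where "p = (\<lambda>y. e2ennreal (max 0 (Wbar W (x - y))))"
  define n where "n = (\<lambda>y. e2ennreal (max 0 (- Wbar W (x - y))))"
  define g where "g = (\<lambda>y. e2ennreal (Wbar W (x - y) + ereal Bw))"
  have mW: "(\<lambda>y. Wbar W (x - y)) \<in> borel_measurable M"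
    unfolding measurable_cong_sets[OF sM refl] using Wm by measurable
  have mp: "p \<in> borel_measurable M" unfolding p_def using mW by measurable
  have mn: "n \<in> borel_measurable M" unfolding n_def using mW by measurable
  have mg: "g \<in> borel_measurable M" unfolding g_def using mW by measurable
  have pw: "g y + n y = p y + ennreal Bw" for y
  proof (cases "x - y \<in> \<int>")
    case True
    then show ?thesis by (simp add: g_def n_def p_def Wbar_def)
  next
    case False
    define w where "w = W (x - y)"
    have w: "w \<ge> - Bw" using Bw False by (simp add: w_def)
    have Wb: "Wbar W (x - y) = ereal w" using False by (simp add: Wbar_def w_def)
    have "g y + n y = ennreal (w + Bw) + ennreal (max 0 (- w))"
      by (simp add: g_def n_def Wb max_def)
    also have "\<dots> = ennreal (w + Bw + max 0 (- w))" using w by (simp add: ennreal_plus)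
    also have "\<dots> = ennreal (max 0 w + Bw)" by (rule arg_cong[where f=ennreal]) (simp add: max_def)
    also have "\<dots> = ennreal (max 0 w) + ennreal Bw" using Bw by (simp add: ennreal_plus)
    also have "\<dots> = p y + ennreal Bw" by (simp add: p_def Wb max_def)
    finally show ?thesis .
  qed
  have nle: "n y \<le> ennreal Bw" for y
  proof (cases "x - y \<in> \<int>")
    case True
    then show ?thesis by (simp add: n_def Wbar_def)
  next
    case False
    have "max 0 (- W (x - y)) \<le> Bw" using Bw False by auto
    then have "ennreal (max 0 (- W (x - y))) \<le> ennreal Bw" by (rule ennreal_leI)
    moreover have "n y = ennreal (max 0 (- W (x - y)))" using False by (simp add: n_def Wbar_def max_def)
    ultimately show ?thesis by simp
  qed
  have eq: "integral\<^sup>N M g + integral\<^sup>N M n = integral\<^sup>N M p + ennreal Bw"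
  proof -
    have "integral\<^sup>N M g + integral\<^sup>N M n = (\<integral>\<^sup>+ y. g y + n y \<partial>M)"
      using mg mn by (simp add: nn_integral_add)
    also have "\<dots> = (\<integral>\<^sup>+ y. p y + ennreal Bw \<partial>M)" using pw by simp
    also have "\<dots> = integral\<^sup>N M p + ennreal Bw"
      using mp by (simp add: nn_integral_add emeasure_space_1)
    finally show ?thesis .
  qed
  have nB: "integral\<^sup>N M n \<le> ennreal Bw"
  proof -
    have "integral\<^sup>N M n \<le> (\<integral>\<^sup>+ y. ennreal Bw \<partial>M)" by (intro nn_integral_mono nle)
    also have "\<dots> = ennreal Bw" by (simp add: emeasure_space_1)
    finally show ?thesis .
  qed
  define GI where "GI = enn2ereal (integral\<^sup>N M g)"
  define NI where "NI = enn2ereal (integral\<^sup>N M n)"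
  define PI where "PI = enn2ereal (integral\<^sup>N M p)"
  have e1: "GI + NI = PI + ereal Bw"
    using arg_cong[OF eq, of enn2ereal] Bw by (simp add: GI_def NI_def PI_def plus_ennreal.rep_eq)
  have e2: "0 \<le> NI" "NI \<le> ereal Bw"
  proof -
    show "0 \<le> NI" by (simp add: NI_def)
    have "enn2ereal (integral\<^sup>N M n) \<le> enn2ereal (ennreal Bw)"
      using nB by (simp only: less_eq_ennreal.rep_eq[symmetric])
    then show "NI \<le> ereal Bw" using Bw by (simp add: NI_def)
  qed
  have e3: "0 \<le> GI" "0 \<le> PI" by (auto simp: GI_def PI_def)
  have "PI - NI = GI - ereal Bw"
  proof -
    obtain nr where nr: "NI = ereal nr" using e2 by (cases NI) auto
    show ?thesis using e1 e3 nr by (cases GI; cases PI) auto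
  qed
  moreover have "convT W M x = PI - NI"
    unfolding convT_def PI_def NI_def p_def n_def by simp
  ultimately show ?thesis unfolding GI_def g_def by simp
qed

lemma essinfT_geI:
  assumes "AE x in lborel. x \<in> {0..1} \<longrightarrow> z \<le> f x"
  shows "z \<le> essinfT f"
  unfolding essinfT_def using assms by (intro Sup_upper) simp

lemma essinfT_AE_le:
  "AE x in lborel. x \<in> {0..(1::real)} \<longrightarrow> essinfT f \<le> f x"
proof -
  define S where "S = {z. AE x in lborel. x \<in> {0..(1::real)} \<longrightarrow> z \<le> f x}"
  have "-\<infinity> \<in> S" by (simp add: S_def)
  then have "S \<noteq> {}" by blast
  from Sup_countable_SUP[OF this] obtain g :: "nat \<Rightarrow> ereal"
    where g: "range g \<subseteq> S" "Sup S = (SUP i. g i)" by blast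
  have "\<forall>i. AE x in lborel. x \<in> {0..(1::real)} \<longrightarrow> g i \<le> f x"
    using g(1) by (auto simp: S_def)
  then have "AE x in lborel. \<forall>i. x \<in> {0..(1::real)} \<longrightarrow> g i \<le> f x"
    using AE_all_countable[where P="\<lambda>i x. x \<in> {0..(1::real)} \<longrightarrow> g i \<le> f x" and M=lborel] by blast
  then show ?thesis
  proof (rule AE_mp, intro AE_I2 impI)
    fix x assume "\<forall>i. x \<in> {0..(1::real)} \<longrightarrow> g i \<le> f x" "x \<in> {0..(1::real)}"
    then have "(SUP i. g i) \<le> f x" by (auto intro: SUP_least)
    then show "essinfT f \<le> f x" using g(2) by (simp add: essinfT_def S_def)
  qed
qed

lemma essinfT_finite:
  assumes "AE x in lborel. x \<in> {0..(1::real)} \<longrightarrow> f x < \<infinity>"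
  shows "essinfT f < \<infinity>"
proof (rule ccontr)
  assume "\<not> essinfT f < \<infinity>"
  then have inf: "essinfT f = \<infinity>" by simp
  have "AE x in lborel. x \<notin> {0..(1::real)}"
    using essinfT_AE_le[of f] assms
  proof (eventually_elim)
    case (elim x)
    then show ?case using inf by auto
  qed
  then have "{0..(1::real)} \<in> null_sets lborel"
    by (subst AE_iff_null_sets) auto
  then have "emeasure lborel {0..(1::real)} = 0" by auto
  then show False by simp
qed

lemma ennreal_Fr:
  fixes W :: "real \<Rightarrow> real"
  assumes "t \<notin> \<int>"
  shows "e2ennreal (Wbar W t + ereal Bw) = ennreal (W t + Bw)"
  using assms by (simp add: Wbar_def)

lemma transl_nn:
  fixes h :: "real \<Rightarrow> ennreal"
  assumes "h \<in> borel_measurable borel"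
  shows "(\<integral>\<^sup>+ x. h x \<partial>lborel) = (\<integral>\<^sup>+ x. h (t + x) \<partial>lborel)"
  using nn_integral_real_affine[OF assms, of 1 t] by simp

lemma conv_fin:
  fixes W :: "real \<Rightarrow> real" and \<rho> :: "real measure" and Bw :: real
  assumes P: "prob_space \<rho>" and s\<rho>: "sets \<rho> = sets borel"
    and conc: "emeasure \<rho> (UNIV - {0..<1}) = 0"
    and Wm: "W \<in> borel_measurable borel"
    and W_per: "\<forall>x. W (x + 1) = W x"
    and Wi: "set_integrable lborel {0..1} W"
    and Bw: "0 \<le> Bw" "\<forall>t. t \<notin> \<int> \<longrightarrow> W t \<ge> - Bw"
  shows "AE x in lborel. x \<in> {0..1} \<longrightarrow> (\<integral>\<^sup>+ y. e2ennreal (Wbar W (x - y) + ereal Bw) \<partial>\<rho>) < \<infinity>"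
proof -
  interpret R: prob_space \<rho> by (rule P)
  interpret pair_sigma_finite lborel \<rho>
    by (intro pair_sigma_finite.intro lborel.sigma_finite_measure_axioms R.sigma_finite_measure_axioms)
  have [measurable]: "Measurable.pred borel (\<lambda>x::real. x \<in> {0..1})" "Measurable.pred borel (\<lambda>x::real. x \<in> {-1..0})"
    by (simp_all add: pred_def)
  define F where "F = (\<lambda>t. e2ennreal (Wbar W t + ereal Bw))"
  define Fr where "Fr = (\<lambda>t. ennreal (W t + Bw))"
  have WbM: "Wbar W \<in> borel_measurable borel" by (rule Wbar_meas[OF Wm])
  have FM[measurable]: "F \<in> borel_measurable borel" unfolding F_def using WbM by measurable
  have FrM[measurable]: "Fr \<in> borel_measurable borel" unfolding Fr_def using Wm by measurable
  define K where "K = (\<integral>\<^sup>+ t. Fr t * indicator {0..1} t \<partial>lborel)"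
  have Kfin: "K < \<infinity>"
  proof -
    have ii: "integrable lborel (\<lambda>x. indicator {0..1} x *\<^sub>R W x)" using Wi by (simp add: set_integrable_def)
    have "(\<integral>\<^sup>+ x. ennreal (indicator {0..1} x *\<^sub>R W x) \<partial>lborel) \<noteq> \<infinity>" using integrableD(2)[OF ii] by simp
    then have f1: "(\<integral>\<^sup>+ x. ennreal (indicator {0..1} x *\<^sub>R W x) \<partial>lborel) < \<infinity>" by (simp add: less_top)
    have le: "Fr t * indicator {0..1} t \<le> ennreal (indicator {0..1} t *\<^sub>R W t) + ennreal Bw * indicator {0..1} t" for t
    proof (cases "t \<in> {0..1}")
      case True
      have "ennreal (W t + Bw) \<le> ennreal (max 0 (W t) + Bw)" by (intro ennreal_leI) auto
      also have "\<dots> = ennreal (max 0 (W t)) + ennreal Bw" using Bw by (simp add: ennreal_plus)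
      also have "ennreal (max 0 (W t)) = ennreal (W t)" by (simp add: max_def ennreal_neg)
      finally show ?thesis using True by (simp add: Fr_def)
    qed simp
    have "K \<le> (\<integral>\<^sup>+ t. ennreal (indicator {0..1} t *\<^sub>R W t) + ennreal Bw * indicator {0..1} t \<partial>lborel)"
      unfolding K_def by (intro nn_integral_mono le)
    also have "\<dots> = (\<integral>\<^sup>+ t. ennreal (indicator {0..1} t *\<^sub>R W t) \<partial>lborel) + (\<integral>\<^sup>+ t. ennreal Bw * indicator {0..1::real} t \<partial>lborel)"
    proof -
      have m1: "(\<lambda>t. ennreal (indicator {0..1} t *\<^sub>R W t)) \<in> borel_measurable lborel" using Wm by measurable
      have m2: "(\<lambda>t::real. ennreal Bw * indicator {0..1} t) \<in> borel_measurable lborel" by measurable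
      show ?thesis using nn_integral_add[OF m1 m2] by simp
    qed
    also have "(\<integral>\<^sup>+ t. ennreal Bw * indicator {0..1::real} t \<partial>lborel) = ennreal Bw"
      by (simp add: nn_integral_cmult_indicator)
    finally have kb: "K \<le> (\<integral>\<^sup>+ x. ennreal (indicator {0..1} x *\<^sub>R W x) \<partial>lborel) + ennreal Bw" .
    have "(\<integral>\<^sup>+ x. ennreal (indicator {0..1} x *\<^sub>R W x) \<partial>lborel) + ennreal Bw < \<infinity>"
      using f1 by (simp add: less_top[symmetric] ennreal_add_eq_top)
    then show ?thesis using kb by (rule le_less_trans[rotated])
  qed
  have inner: "(\<integral>\<^sup>+ x. F (x - y) * indicator {0..1} x \<partial>lborel) \<le> 2 * K" if y: "y \<in> {0..<1}" for y
  proof -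
    have ae: "AE x in lborel. x \<notin> (\<lambda>k. k + y) ` \<int>"
      by (intro AE_not_in countable_imp_null_set_lborel countable_image countable_int)
    have "(\<integral>\<^sup>+ x. F (x - y) * indicator {0..1} x \<partial>lborel) = (\<integral>\<^sup>+ x. Fr (x - y) * indicator {0..1} x \<partial>lborel)"
    proof (rule nn_integral_cong_AE)
      show "AE x in lborel. F (x - y) * indicator {0..1} x = Fr (x - y) * indicator {0..1} x"
        using ae
      proof eventually_elim
        case (elim x)
        then have "x - y \<notin> \<int>" by (metis diff_add_cancel image_eqI)
        then show ?case by (simp add: F_def Fr_def ennreal_Fr)
      qed
    qed
    also have "\<dots> = (\<integral>\<^sup>+ t. Fr t * indicator {0..1} (y + t) \<partial>lborel)"
      by (subst transl_nn[where t=y]) (auto simp: add.commute)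
    also have "\<dots> \<le> (\<integral>\<^sup>+ t. Fr t * indicator {-1..0} t + Fr t * indicator {0..1} t \<partial>lborel)"
    proof (intro nn_integral_mono)
      fix t show "Fr t * indicator {0..1} (y + t) \<le> Fr t * indicator {-1..0} t + Fr t * indicator {0..1} t"
        using y by (cases "y + t \<in> {0..1}"; cases "t \<in> {0..1}"; cases "t \<in> {-1..0}") auto
    qed
    also have "\<dots> = (\<integral>\<^sup>+ t. Fr t * indicator {-1..0} t \<partial>lborel) + K"
      unfolding K_def by (intro nn_integral_add) auto
    also have "(\<integral>\<^sup>+ t. Fr t * indicator {-1..0} t \<partial>lborel) = K"
    proof -
      have "(\<integral>\<^sup>+ t. Fr t * indicator {-1..0} t \<partial>lborel) = (\<integral>\<^sup>+ s. Fr (-1 + s) * indicator {-1..0} (-1 + s) \<partial>lborel)"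
        by (subst transl_nn[where t="-1"]) auto
      also have "\<dots> = K" unfolding K_def
      proof (intro nn_integral_cong)
        fix s :: real
        have "W (-1 + s) = W s" using W_int_per[OF W_per, of "-1 + s" 1] by simp
        moreover have "indicator {-1..0} (-1 + s) = (indicator {0..1} s :: ennreal)"
          by (auto simp: indicator_def)
        ultimately show "Fr (-1 + s) * indicator {-1..0} (-1 + s) = Fr s * indicator {0..1} s"
          by (simp add: Fr_def)
      qed
      finally show ?thesis .
    qed
    finally show ?thesis by (simp add: mult_2)
  qed
  have jm: "(\<lambda>(x, y). F (x - y) * indicator {0..1} x) \<in> borel_measurable (lborel \<Otimes>\<^sub>M \<rho>)"
    unfolding measurable_cong_sets[OF sets_pair_measure_cong[OF sets_lborel s\<rho>] refl] by measurable
  have aey: "AE y in \<rho>. y \<in> {0..<1}"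
  proof -
    have "UNIV - {0..<1} \<in> null_sets \<rho>" using conc s\<rho> by (auto simp: null_sets_def)
    then show ?thesis by (rule AE_I') auto
  qed
  have "(\<integral>\<^sup>+ x. (\<integral>\<^sup>+ y. F (x - y) * indicator {0..1} x \<partial>\<rho>) \<partial>lborel)
      = (\<integral>\<^sup>+ y. (\<integral>\<^sup>+ x. F (x - y) * indicator {0..1} x \<partial>lborel) \<partial>\<rho>)"
    using Fubini'[of "\<lambda>x y. F (x - y) * indicator {0..1} x"] jm by simp
  also have "\<dots> \<le> (\<integral>\<^sup>+ y. 2 * K \<partial>\<rho>)"
    using aey by (intro nn_integral_mono_AE) (elim eventually_mono, rule inner)
  also have "\<dots> = 2 * K" by (simp add: R.emeasure_space_1)
  also have "\<dots> < \<infinity>" using Kfin by (simp add: ennreal_mult_less_top)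
  finally have tot: "(\<integral>\<^sup>+ x. (\<integral>\<^sup>+ y. F (x - y) * indicator {0..1} x \<partial>\<rho>) \<partial>lborel) \<noteq> \<infinity>" by simp
  have mm: "(\<lambda>x. \<integral>\<^sup>+ y. F (x - y) * indicator {0..1} x \<partial>\<rho>) \<in> borel_measurable lborel"
    using R.borel_measurable_nn_integral_fst[OF jm] by simp
  from nn_integral_PInf_AE[OF mm tot]
  show ?thesis
  proof eventually_elim
    case (elim x)
    show ?case
    proof
      assume x: "x \<in> {0..1}"
      have "(\<integral>\<^sup>+ y. F (x - y) * indicator {0..1} x \<partial>\<rho>) = (\<integral>\<^sup>+ y. F (x - y) \<partial>\<rho>)"
        using x by simp
      then show "(\<integral>\<^sup>+ y. e2ennreal (Wbar W (x - y) + ereal Bw) \<partial>\<rho>) < \<infinity>"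
        using elim by (simp add: F_def less_top)
    qed
  qed
qed

lemma lift_meas[measurable]: "(\<lambda>y. liftT x0 y) \<in> borel_measurable borel"
  unfolding liftT_def round_def by measurable

lemma lift_meas'[measurable]: "liftT x0 \<in> borel_measurable borel"
  using lift_meas[of x0] by simp

lemma lift_decomp: "y = x0 + liftT x0 y + of_int (round (y - x0))"
  by (simp add: liftT_def)

lemma lift_abs: "\<bar>liftT x0 y\<bar> \<le> 1/2"
  using of_int_round_ge[of "y - x0"] of_int_round_le[of "y - x0"] unfolding liftT_def by linarith

lemma lift_unique: "\<bar>y - x0 - of_int k\<bar> < 1/2 \<Longrightarrow> liftT x0 y = y - x0 - of_int k"
  using round_unique'[of "y - x0" k] by (simp add: liftT_def)

lemma lift_tri:
  assumes "\<bar>liftT x0 x\<bar> + \<bar>liftT x y\<bar> < 1/2"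
  shows "\<bar>liftT x0 y\<bar> \<le> \<bar>liftT x0 x\<bar> + \<bar>liftT x y\<bar>"
proof -
  define k where "k = round (x - x0) + round (y - x)"
  have "y - x0 - of_int k = liftT x0 x + liftT x y" by (simp add: liftT_def k_def)
  moreover have "\<bar>liftT x0 x + liftT x y\<bar> < 1/2" using assms by linarith
  ultimately have "liftT x0 y = liftT x0 x + liftT x y"
    using lift_unique[of y x0 k] by simp
  then show ?thesis by simp
qed

lemma no_int:
  assumes "\<bar>liftT x0 x\<bar> > e" "\<bar>u\<bar> \<le> e" "e < 1/2"
  shows "x - x0 - u \<notin> \<int>"
proof
  assume "x - x0 - u \<in> \<int>"
  then obtain k where k: "x - x0 - u = of_int k" by (auto elim: Ints_cases)
  then have "x - x0 - of_int k = u" by simp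
  then have "\<bar>x - x0 - of_int k\<bar> < 1/2" using assms by linarith
  then have "liftT x0 x = x - x0 - of_int k" by (rule lift_unique)
  then show False using k assms by auto
qed

lemma Wbar_shift_int:
  fixes W :: "real \<Rightarrow> real"
  assumes W_per: "\<forall>x. W (x + 1) = W x" and "t' = t + of_int k"
  shows "Wbar W t' = Wbar W t"
  using Wbar_per[OF W_per] assms(2) by simp

lemma Wbar_atom:
  fixes W :: "real \<Rightarrow> real"
  assumes W_per: "\<forall>x. W (x + 1) = W x"
  shows "Wbar W (x - frac z) = Wbar W (x - z)"
  by (rule Wbar_shift_int[OF W_per, of _ _ "floor z"]) (simp add: frac_def)

lemma Wbar_arc:
  fixes W :: "real \<Rightarrow> real"
  assumes W_per: "\<forall>x. W (x + 1) = W x"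
  shows "Wbar W (x - y) = Wbar W (x - x0 - liftT x0 y)"
  by (rule Wbar_shift_int[OF W_per, of _ _ "- round (y - x0)"]) (simp add: liftT_def)

locale L =
  fixes W U :: "real \<Rightarrow> real" and \<rho> :: "real measure"
    and x0 \<epsilon> c m1 m2 :: real and W' W'' :: "real \<Rightarrow> real" and C1 Bw Umin :: real
  assumes W_per: "\<forall>x. W (x + 1) = W x"
    and Wi: "set_integrable lborel {0..1} W"
    and Wd: "\<forall>x. x \<notin> \<int> \<longrightarrow> (W has_real_derivative W' x) (at x) \<and> (W' has_real_derivative W'' x) (at x) \<and> W'' x \<ge> C1"
    and C1: "C1 > 0"
    and Bw: "0 \<le> Bw" and Wlow: "\<forall>t. t \<notin> \<int> \<longrightarrow> W t \<ge> - Bw"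
    and U_per: "\<forall>x. U (x + 1) = U x"
    and Ub: "\<forall>x. U x \<ge> Umin"
    and rho: "isTprob \<rho>"
    and eps: "0 < \<epsilon>" "\<epsilon> < 1/2"
    and c: "c > 0"
    and gap: "\<forall>x\<in>{x0 - \<epsilon>..x0 + \<epsilon>}. VU U W \<rho> x \<ge> essinfT (VU U W \<rho>) + ereal c"
    and supp: "\<exists>x\<in>suppT \<rho>. \<bar>liftT x0 x\<bar> < \<epsilon> / 2"
    and m_pos: "m1 > 0" "m2 > 0"
    and moments: "\<forall>k\<in>{0, 1::nat}.
              m1 * (- \<epsilon>) ^ k + m2 * \<epsilon> ^ k - (\<integral>u. u ^ k \<partial>(tauT \<rho> x0 \<epsilon>)) = 0"
begin

definition "A = arcT x0 \<epsilon>"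
definition "pa = frac (x0 - \<epsilon>)"
definition "pb = frac (x0 + \<epsilon>)"
definition "G x y = e2ennreal (Wbar W (x - y) + ereal Bw)"
definition "mu lam = msum (density \<rho> (\<lambda>y. ennreal (1 - lam * indicator A y)))
   (msum (scale_measure (ennreal (lam * m1)) (return borel pa)) (scale_measure (ennreal (lam * m2)) (return borel pb)))"

lemma P: "prob_space \<rho>" and s\<rho>: "sets \<rho> = sets borel" and conc: "emeasure \<rho> (UNIV - {0..<1}) = 0"
  using rho by (auto simp: isTprob_def)

lemma sp\<rho>[simp]: "space \<rho> = UNIV"
  using sets_eq_imp_space_eq[OF s\<rho>] by simp

lemma meas\<rho>[simp]: "borel_measurable \<rho> = borel_measurable borel"
  by (rule measurable_cong_sets[OF s\<rho> refl])

lemma sets\<rho>[simp]: "B \<in> sets \<rho> \<longleftrightarrow> B \<in> sets borel"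
  using s\<rho> by simp

lemma Wm[measurable]: "W \<in> borel_measurable borel"
  by (rule W_meas[of W W']) (use Wd in blast)

lemma Wbm[measurable]: "Wbar W \<in> borel_measurable borel"
  by (rule Wbar_meas[OF Wm])

lemma A_sets[measurable]: "A \<in> sets borel"
proof -
  have "A = {y \<in> space borel. y \<in> {0..<1} \<and> \<bar>liftT x0 y\<bar> < \<epsilon>}" by (auto simp: A_def arcT_def)
  also have "\<dots> \<in> sets borel" by measurable
  finally show ?thesis .
qed

lemma A_sub: "A \<subseteq> {0..<1}" by (auto simp: A_def arcT_def)

lemma A_lift: "y \<in> A \<Longrightarrow> \<bar>liftT x0 y\<bar> < \<epsilon>" by (auto simp: A_def arcT_def)

lemma pa01: "pa \<in> {0..<1}" and pb01: "pb \<in> {0..<1}"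
  by (auto simp: pa_def pb_def frac_lt_1)

lemma sets_mu[simp, measurable_cong]: "sets (mu lam) = sets borel"
  by (simp add: mu_def s\<rho>)

lemma space_mu[simp]: "space (mu lam) = UNIV"
  using sets_eq_imp_space_eq[OF sets_mu] by simp

lemma nn_integral_mu:
  assumes f[measurable]: "f \<in> borel_measurable borel"
  shows "(\<integral>\<^sup>+ y. f y \<partial>mu lam) = (\<integral>\<^sup>+ y. ennreal (1 - lam * indicator A y) * f y \<partial>\<rho>)
            + ennreal (lam * m1) * f pa + ennreal (lam * m2) * f pb"
proof -
  have m1: "f \<in> borel_measurable (density \<rho> (\<lambda>y. ennreal (1 - lam * indicator A y)))" by simp
  have "(\<integral>\<^sup>+ y. f y \<partial>mu lam) = (\<integral>\<^sup>+ y. f y \<partial>density \<rho> (\<lambda>y. ennreal (1 - lam * indicator A y)))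
     + (\<integral>\<^sup>+ y. f y \<partial>msum (scale_measure (ennreal (lam * m1)) (return borel pa)) (scale_measure (ennreal (lam * m2)) (return borel pb)))"
    unfolding mu_def by (rule nn_integral_msum) (simp_all add: s\<rho>)
  also have "(\<integral>\<^sup>+ y. f y \<partial>msum (scale_measure (ennreal (lam * m1)) (return borel pa)) (scale_measure (ennreal (lam * m2)) (return borel pb)))
     = (\<integral>\<^sup>+ y. f y \<partial>scale_measure (ennreal (lam * m1)) (return borel pa)) + (\<integral>\<^sup>+ y. f y \<partial>scale_measure (ennreal (lam * m2)) (return borel pb))"
  proof (rule nn_integral_msum)
    have "(borel_measurable (scale_measure (ennreal (lam * m1)) (return borel pa)) :: (real \<Rightarrow> ennreal) set) = borel_measurable borel"
      by (rule measurable_cong_sets) simp_all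
    then show "f \<in> borel_measurable (scale_measure (ennreal (lam * m1)) (return borel pa))"
      using f by (simp only:)
  qed simp
  also have "(\<integral>\<^sup>+ y. f y \<partial>scale_measure (ennreal (lam * m1)) (return borel pa)) = ennreal (lam * m1) * f pa"
    by (simp add: nn_integral_scale_measure nn_integral_return)
  also have "(\<integral>\<^sup>+ y. f y \<partial>scale_measure (ennreal (lam * m2)) (return borel pb)) = ennreal (lam * m2) * f pb"
    by (simp add: nn_integral_scale_measure nn_integral_return)
  also have "(\<integral>\<^sup>+ y. f y \<partial>density \<rho> (\<lambda>y. ennreal (1 - lam * indicator A y))) = (\<integral>\<^sup>+ y. ennreal (1 - lam * indicator A y) * f y \<partial>\<rho>)"
    by (rule nn_integral_density) simp_all
  finally show ?thesis by (simp add: add.assoc)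
qed

end

context L begin

lemma A_sets'[measurable]: "A \<in> sets \<rho>" using A_sets by simp

lemma fin: "finite_measure \<rho>"
  using P by (simp add: prob_space_def)

lemma int_bounded:
  fixes f :: "real \<Rightarrow> real"
  assumes "f \<in> borel_measurable borel" "\<And>y. \<bar>f y\<bar> \<le> B"
  shows "integrable \<rho> f"
  using finite_measure.integrable_const_bound[OF fin, of f B] assms by simp

lemma int_tau:
  fixes f :: "real \<Rightarrow> real"
  assumes f[measurable]: "f \<in> borel_measurable borel"
  shows "(\<integral>u. f u \<partial>tauT \<rho> x0 \<epsilon>) = (\<integral>y. indicator A y * f (liftT x0 y) \<partial>\<rho>)"
proof -
  have R: "restrT \<rho> x0 \<epsilon> = density \<rho> (\<lambda>y. ennreal (indicator A y))"
    by (simp add: restrT_def A_def ennreal_indicator)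
  have sR: "sets (restrT \<rho> x0 \<epsilon>) = sets borel" by (simp add: R s\<rho>)
  have lm: "liftT x0 \<in> measurable (restrT \<rho> x0 \<epsilon>) lborel"
    unfolding measurable_cong_sets[OF sR sets_lborel] by simp
  have fm: "f \<in> borel_measurable lborel"
    unfolding measurable_cong_sets[OF sets_lborel refl] by simp
  have "(\<integral>u. f u \<partial>tauT \<rho> x0 \<epsilon>) = (\<integral>y. f (liftT x0 y) \<partial>restrT \<rho> x0 \<epsilon>)"
    unfolding tauT_def by (rule integral_distr[OF lm fm])
  also have "\<dots> = (\<integral>y. indicator A y *\<^sub>R f (liftT x0 y) \<partial>\<rho>)"
    unfolding R by (rule integral_density) auto
  finally show ?thesis by simp
qed

lemma measure_restr:
  assumes B: "B \<in> sets borel"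
  shows "measure (restrT \<rho> x0 \<epsilon>) B = measure \<rho> (A \<inter> B)"
proof -
  have "emeasure (restrT \<rho> x0 \<epsilon>) B = (\<integral>\<^sup>+ y. indicator A y * indicator B y \<partial>\<rho>)"
    unfolding restrT_def A_def[symmetric] by (rule emeasure_density) (use B in auto)
  also have "\<dots> = (\<integral>\<^sup>+ y. indicator (A \<inter> B) y \<partial>\<rho>)"
    by (intro nn_integral_cong) (simp split: split_indicator)
  also have "\<dots> = emeasure \<rho> (A \<inter> B)" using B by (intro nn_integral_indicator) auto
  finally show ?thesis by (simp add: measure_def)
qed

definition "P0 = measure \<rho> A"
definition "P1 = (\<integral>y. indicator A y * liftT x0 y \<partial>\<rho>)"
definition "P2 = (\<integral>y. indicator A y * (liftT x0 y)\<^sup>2 \<partial>\<rho>)"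

lemma int_ind: "integrable \<rho> (\<lambda>y. indicator A y :: real)"
  by (rule int_bounded[where B=1]) auto

lemma int_l1: "integrable \<rho> (\<lambda>y. indicator A y * liftT x0 y)"
proof (rule int_bounded[where B=1])
  fix y
  have "\<bar>liftT x0 y\<bar> \<le> 1" using lift_abs[of x0 y] by simp
  then show "\<bar>indicator A y * liftT x0 y\<bar> \<le> 1" by (simp add: indicator_def)
qed simp

lemma int_l2: "integrable \<rho> (\<lambda>y. indicator A y * (liftT x0 y)\<^sup>2)"
proof (rule int_bounded[where B=1])
  fix y
  have "\<bar>liftT x0 y\<bar> \<le> 1" using lift_abs[of x0 y] by simp
  then have "(liftT x0 y)\<^sup>2 \<le> 1" using abs_square_le_1 by blast
  then show "\<bar>indicator A y * (liftT x0 y)\<^sup>2\<bar> \<le> 1" by (simp add: indicator_def)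
qed simp

lemma mom0: "m1 + m2 = P0"
proof -
  have "m1 * (- \<epsilon>) ^ 0 + m2 * \<epsilon> ^ 0 - (\<integral>u. u ^ 0 \<partial>(tauT \<rho> x0 \<epsilon>)) = 0" using moments by auto
  moreover have "(\<integral>u. u ^ 0 \<partial>(tauT \<rho> x0 \<epsilon>)) = P0"
    using int_tau[of "\<lambda>u. u ^ 0"] by (simp add: P0_def)
  ultimately show ?thesis by simp
qed

lemma mom1: "P1 = \<epsilon> * (m2 - m1)"
proof -
  have "m1 * (- \<epsilon>) ^ 1 + m2 * \<epsilon> ^ 1 - (\<integral>u. u ^ 1 \<partial>(tauT \<rho> x0 \<epsilon>)) = 0" using moments by auto
  moreover have "(\<integral>u. u ^ 1 \<partial>(tauT \<rho> x0 \<epsilon>)) = P1"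
    using int_tau[of "\<lambda>u. u ^ 1"] by (simp add: P1_def)
  ultimately show ?thesis by (simp add: algebra_simps)
qed

lemma rhoA_pos: "emeasure \<rho> A > 0"
proof -
  obtain z where z: "z \<in> suppT \<rho>" "\<bar>liftT x0 z\<bar> < \<epsilon> / 2" using supp by blast
  define S where "S = {y. \<bar>liftT z y\<bar> < \<epsilon> / 2}"
  have Spos: "emeasure \<rho> S > 0"
  proof -
    have "\<forall>r>0. emeasure \<rho> {y. \<bar>liftT z y\<bar> < r} > 0" using z(1) unfolding suppT_def by simp
    moreover have "\<epsilon> / 2 > 0" using eps by simp
    ultimately show ?thesis unfolding S_def by blast
  qed
  have Sm: "S \<in> sets borel"
  proof -
    have "S = {y \<in> space borel. \<bar>liftT z y\<bar> < \<epsilon> / 2}" by (simp add: S_def)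
    also have "\<dots> \<in> sets borel" by measurable
    finally show ?thesis .
  qed
  have sub: "S \<inter> {0..<1} \<subseteq> A"
  proof
    fix y assume y: "y \<in> S \<inter> {0..<1}"
    then have "\<bar>liftT z y\<bar> < \<epsilon> / 2" by (simp add: S_def)
    then have "\<bar>liftT x0 y\<bar> < \<epsilon>" using lift_tri[of x0 z y] z(2) eps by linarith
    then show "y \<in> A" using y by (simp add: A_def arcT_def)
  qed
  have "emeasure \<rho> S \<le> emeasure \<rho> (S \<inter> {0..<1}) + emeasure \<rho> (UNIV - {0..<1})"
    by (rule order_trans[OF emeasure_mono emeasure_subadditive]) (use Sm in auto)
  also have "\<dots> = emeasure \<rho> (S \<inter> {0..<1})" using conc by simp
  also have "\<dots> \<le> emeasure \<rho> A" by (rule emeasure_mono[OF sub]) simp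
  finally show ?thesis using Spos by simp
qed

lemma P0_pos: "P0 > 0"
proof -
  interpret prob_space \<rho> by (rule P)
  show ?thesis using rhoA_pos by (simp add: P0_def emeasure_eq_measure)
qed

definition "k0 = (\<integral>y. indicator A y * (\<epsilon>\<^sup>2 - (liftT x0 y)\<^sup>2) \<partial>\<rho>)"

lemma k0_eq: "k0 = \<epsilon>\<^sup>2 * P0 - P2"
proof -
  have "k0 = (\<integral>y. \<epsilon>\<^sup>2 * indicator A y - indicator A y * (liftT x0 y)\<^sup>2 \<partial>\<rho>)"
    unfolding k0_def by (intro Bochner_Integration.integral_cong) (auto simp: algebra_simps)
  also have "\<dots> = \<epsilon>\<^sup>2 * P0 - P2"
    using int_ind int_l2 by (simp add: P0_def P2_def)
  finally show ?thesis .
qed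

lemma k0_pos: "k0 > 0"
proof -
  define f where "f = (\<lambda>y. indicator A y * (\<epsilon>\<^sup>2 - (liftT x0 y)\<^sup>2))"
  have fi: "integrable \<rho> f" unfolding f_def using int_ind int_l2 by (simp add: right_diff_distrib)
  have pos: "y \<in> A \<Longrightarrow> f y > 0" for y
  proof -
    assume y: "y \<in> A"
    then have "\<bar>liftT x0 y\<bar> < \<epsilon>" by (rule A_lift)
    then have "(liftT x0 y)\<^sup>2 < \<epsilon>\<^sup>2" using eps by (simp add: abs_less_iff power2_eq_square) (smt (verit) mult_strict_mono mult_minus_left mult_minus_right abs_less_iff)
    then show ?thesis using y by (simp add: f_def)
  qed
  have nn: "AE y in \<rho>. 0 \<le> f y"
  proof (intro AE_I2)
    fix y show "0 \<le> f y"
    proof (cases "y \<in> A")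
      case True then show ?thesis using pos[OF True] by simp
    next
      case False then show ?thesis by (simp add: f_def)
    qed
  qed
  have ge: "0 \<le> integral\<^sup>L \<rho> f" using nn by (rule integral_nonneg_AE)
  have ne: "integral\<^sup>L \<rho> f \<noteq> 0"
  proof
    assume "integral\<^sup>L \<rho> f = 0"
    then have "AE y in \<rho>. f y = 0" using integral_nonneg_eq_0_iff_AE[OF fi nn] by simp
    then have "AE y in \<rho>. y \<notin> A" by eventually_elim (use pos in force)
    then have "A \<in> null_sets \<rho>" by (subst AE_iff_null_sets) auto
    then show False using rhoA_pos by auto
  qed
  show ?thesis using ge ne by (simp add: k0_def f_def[symmetric])
qed

end

context L begin

lemma emeasure_mu:
  assumes lam: "0 \<le> lam" "lam \<le> 1" and B[measurable]: "B \<in> sets borel"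
  shows "emeasure (mu lam) B = ennreal (measure \<rho> B - lam * measure \<rho> (A \<inter> B) + lam * m1 * indicator B pa + lam * m2 * indicator B pb)"
proof -
  interpret R: prob_space \<rho> by (rule P)
  have AB: "A \<inter> B \<in> sets borel" by simp
  have mono: "measure \<rho> (A \<inter> B) \<le> measure \<rho> B"
    by (rule R.finite_measure_mono) auto
  have nnr: "0 \<le> measure \<rho> B - lam * measure \<rho> (A \<inter> B)"
  proof -
    have "lam * measure \<rho> (A \<inter> B) \<le> 1 * measure \<rho> (A \<inter> B)"
      by (rule mult_right_mono) (use lam in auto)
    then show ?thesis using mono by simp
  qed
  have "emeasure (mu lam) B = (\<integral>\<^sup>+ y. indicator B y \<partial>mu lam)"
    by (rule nn_integral_indicator[symmetric]) simp
  also have "\<dots> = (\<integral>\<^sup>+ y. ennreal (1 - lam * indicator A y) * indicator B y \<partial>\<rho>)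
            + ennreal (lam * m1) * indicator B pa + ennreal (lam * m2) * indicator B pb"
    by (rule nn_integral_mu) simp
  also have "(\<integral>\<^sup>+ y. ennreal (1 - lam * indicator A y) * indicator B y \<partial>\<rho>)
       = (\<integral>\<^sup>+ y. ennreal (indicator B y - lam * indicator (A \<inter> B) y) \<partial>\<rho>)"
    by (intro nn_integral_cong) (use lam in \<open>auto split: split_indicator\<close>)
  also have "\<dots> = ennreal (\<integral>y. indicator B y - lam * indicator (A \<inter> B) y \<partial>\<rho>)"
  proof (rule nn_integral_eq_integral)
    show "integrable \<rho> (\<lambda>y. indicator B y - lam * indicator (A \<inter> B) y)"
      by (rule int_bounded[where B="1 + lam"]) (use lam in \<open>auto split: split_indicator\<close>)
    show "AE y in \<rho>. 0 \<le> indicator B y - lam * indicator (A \<inter> B) y"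
      by (intro AE_I2) (use lam in \<open>auto split: split_indicator\<close>)
  qed
  also have "(\<integral>y. indicator B y - lam * indicator (A \<inter> B) y \<partial>\<rho>) = measure \<rho> B - lam * measure \<rho> (A \<inter> B)"
  proof -
    have i1: "integrable \<rho> (\<lambda>y. indicator B y :: real)" by (rule int_bounded[where B=1]) auto
    have i2: "integrable \<rho> (\<lambda>y. indicator (A \<inter> B) y :: real)" by (rule int_bounded[where B=1]) auto
    show ?thesis using i1 i2 by simp
  qed
  also have "ennreal (lam * m1) * indicator B pa = ennreal (lam * m1 * indicator B pa)"
    by (simp split: split_indicator)
  also have "ennreal (lam * m2) * indicator B pb = ennreal (lam * m2 * indicator B pb)"
    by (simp split: split_indicator)
  finally show ?thesis
    using nnr lam m_pos by (simp add: ennreal_plus[symmetric] del: ennreal_plus)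
qed

lemma measure_mu:
  assumes lam: "0 \<le> lam" "lam \<le> 1" and B: "B \<in> sets borel"
  shows "measure (mu lam) B = rhoLam \<rho> x0 \<epsilon> m1 m2 lam B"
proof -
  interpret R: prob_space \<rho> by (rule P)
  have mono: "measure \<rho> (A \<inter> B) \<le> measure \<rho> B"
    by (rule R.finite_measure_mono) (use B in auto)
  have nnr: "0 \<le> measure \<rho> B - lam * measure \<rho> (A \<inter> B) + lam * m1 * indicator B pa + lam * m2 * indicator B pb"
  proof -
    have "lam * measure \<rho> (A \<inter> B) \<le> 1 * measure \<rho> (A \<inter> B)"
      by (rule mult_right_mono) (use lam in auto)
    moreover have "0 \<le> lam * m1 * indicator B pa" "0 \<le> lam * m2 * indicator B pb"
      using lam m_pos by auto
    ultimately show ?thesis using mono by simp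
  qed
  have "measure (mu lam) B = measure \<rho> B - lam * measure \<rho> (A \<inter> B) + lam * m1 * indicator B pa + lam * m2 * indicator B pb"
  proof -
    have "measure (mu lam) B = enn2real (emeasure (mu lam) B)" by (simp only: measure_def)
    also have "\<dots> = enn2real (ennreal (measure \<rho> B - lam * measure \<rho> (A \<inter> B) + lam * m1 * indicator B pa + lam * m2 * indicator B pb))"
      by (simp only: emeasure_mu[OF lam B])
    also have "\<dots> = measure \<rho> B - lam * measure \<rho> (A \<inter> B) + lam * m1 * indicator B pa + lam * m2 * indicator B pb"
      using nnr by (rule enn2real_ennreal)
    finally show ?thesis .
  qed
  also have "\<dots> = rhoLam \<rho> x0 \<epsilon> m1 m2 lam B"
    unfolding rhoLam_def measure_restr[OF B] pa_def pb_def by (simp add: algebra_simps)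
  finally show ?thesis .
qed

lemma isTprob_mu:
  assumes lam: "0 \<le> lam" "lam \<le> 1"
  shows "isTprob (mu lam)"
proof -
  interpret R: prob_space \<rho> by (rule P)
  have "emeasure (mu lam) UNIV = ennreal (1 - lam * P0 + lam * m1 + lam * m2)"
    using emeasure_mu[OF lam, of UNIV] R.prob_space[unfolded sp\<rho>] by (simp add: P0_def)
  also have "\<dots> = 1" using mom0 by (simp add: algebra_simps flip: distrib_left)
  finally have p: "prob_space (mu lam)" by (intro prob_spaceI) simp
  have "UNIV - {0..<1} \<in> sets (borel :: real measure)" by simp
  have "measure \<rho> (UNIV - {0..<1}) = 0" using conc by (simp add: measure_def)
  moreover have "A \<inter> (UNIV - {0..<1}) = {}" using A_sub by auto
  moreover have "indicator (UNIV - {0..<1}) pa = (0::real)" "indicator (UNIV - {0..<1}) pb = (0::real)"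
    using pa01 pb01 by auto
  ultimately have "emeasure (mu lam) (UNIV - {0..<1}) = 0"
    using emeasure_mu[OF lam, of "UNIV - {0..<1}"] by simp
  then show ?thesis using p by (simp add: isTprob_def)
qed

end

context L begin

lemma G_fin: "t \<notin> \<int> \<Longrightarrow> e2ennreal (Wbar W t + ereal Bw) = ennreal (W t + Bw)"
  by (simp add: Wbar_def)

lemma conv_outside:
  assumes xo: "\<bar>liftT x0 x\<bar> > \<epsilon>"
  defines "Ga \<equiv> W (x - x0 + \<epsilon>) + Bw" and "Gb \<equiv> W (x - x0 - \<epsilon>) + Bw"
  shows "G x pa = ennreal Ga" "G x pb = ennreal Gb" "0 \<le> Ga" "0 \<le> Gb"
    and "(\<integral>\<^sup>+ y. indicator A y * G x y \<partial>\<rho>) \<le> ennreal (m1 * Ga + m2 * Gb - C1 / 2 * k0)"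
    and "0 \<le> m1 * Ga + m2 * Gb - C1 / 2 * k0"
proof -
  define d where "d = x - x0"
  define h where "h = (\<lambda>u. W (d - u) + Bw)"
  have ni: "d - u \<notin> \<int>" if "\<bar>u\<bar> \<le> \<epsilon>" for u
    using no_int[OF xo that eps(2)] by (simp add: d_def)
  have hnn: "0 \<le> h u" if "\<bar>u\<bar> \<le> \<epsilon>" for u
    using Wlow ni[OF that] by (auto simp: h_def)
  have ha: "h (- \<epsilon>) = Ga" by (simp add: h_def Ga_def d_def)
  have hb: "h \<epsilon> = Gb" by (simp add: h_def Gb_def d_def)
  show "0 \<le> Ga" using hnn[of "-\<epsilon>"] eps ha by simp
  show "0 \<le> Gb" using hnn[of "\<epsilon>"] eps hb by simp
  show "G x pa = ennreal Ga"
  proof -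
    have "Wbar W (x - pa) = Wbar W (x - (x0 - \<epsilon>))" unfolding pa_def by (rule Wbar_atom[OF W_per])
    also have "x - (x0 - \<epsilon>) = d - (- \<epsilon>)" by (simp add: d_def)
    finally have "G x pa = e2ennreal (Wbar W (d - (- \<epsilon>)) + ereal Bw)" by (simp add: G_def)
    also have "\<dots> = ennreal (h (- \<epsilon>))" using ni[of "-\<epsilon>"] eps by (simp add: G_fin h_def)
    finally show ?thesis using ha by simp
  qed
  show "G x pb = ennreal Gb"
  proof -
    have "Wbar W (x - pb) = Wbar W (x - (x0 + \<epsilon>))" unfolding pb_def by (rule Wbar_atom[OF W_per])
    also have "x - (x0 + \<epsilon>) = d - \<epsilon>" by (simp add: d_def)
    finally have "G x pb = e2ennreal (Wbar W (d - \<epsilon>) + ereal Bw)" by (simp add: G_def)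
    also have "\<dots> = ennreal (h \<epsilon>)" using ni[of "\<epsilon>"] eps by (simp add: G_fin h_def)
    finally show ?thesis using hb by simp
  qed
  define \<alpha> where "\<alpha> = (Ga + Gb) / 2 - C1 / 2 * \<epsilon>\<^sup>2"
  define \<beta> where "\<beta> = (Gb - Ga) / (2 * \<epsilon>)"
  define \<gamma> where "\<gamma> = C1 / 2"
  have chord: "h u \<le> \<alpha> + \<beta> * u + \<gamma> * u\<^sup>2" if u: "u \<in> {-\<epsilon>..\<epsilon>}" for u
  proof -
    have cb: "h u \<le> ((\<epsilon> - u) * h (-\<epsilon>) + (u - (-\<epsilon>)) * h \<epsilon>) / (\<epsilon> - (-\<epsilon>)) - C1 / 2 * ((u - (-\<epsilon>)) * (\<epsilon> - u))"
    proof (rule chord_bound[where h'="\<lambda>u. - W' (d - u)" and h''="\<lambda>u. W'' (d - u)"])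
      show "- \<epsilon> < \<epsilon>" using eps by simp
      show "u \<in> {- \<epsilon>..\<epsilon>}" by fact
      fix v assume v: "v \<in> {- \<epsilon>..\<epsilon>}"
      then have nv: "d - v \<notin> \<int>" using ni by auto
      have dd: "((\<lambda>v. d - v) has_real_derivative -1) (at v)" by (auto intro!: derivative_eq_intros)
      have "((\<lambda>v. W (d - v)) has_real_derivative W' (d - v) * -1) (at v)"
        by (rule DERIV_chain2[OF _ dd]) (use Wd nv in blast)
      then show "(h has_real_derivative - W' (d - v)) (at v)"
        unfolding h_def by (auto intro!: derivative_eq_intros)
      have "((\<lambda>v. W' (d - v)) has_real_derivative W'' (d - v) * -1) (at v)"
        by (rule DERIV_chain2[OF _ dd]) (use Wd nv in blast)
      then show "((\<lambda>u. - W' (d - u)) has_real_derivative W'' (d - v)) (at v)"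
        using DERIV_minus by fastforce
      show "C1 \<le> W'' (d - v)" using Wd nv by blast
    qed
    also have "\<dots> = \<alpha> + \<beta> * u + \<gamma> * u\<^sup>2"
      unfolding ha hb \<alpha>_def \<beta>_def \<gamma>_def using eps
      by (simp add: field_simps power2_eq_square)
    finally show ?thesis .
  qed
  define \<phi> where "\<phi> = (\<lambda>y. indicator A y * (\<alpha> + \<beta> * liftT x0 y + \<gamma> * (liftT x0 y)\<^sup>2))"
  have pw: "indicator A y * G x y \<le> ennreal (\<phi> y)" for y
  proof (cases "y \<in> A")
    case True
    define u where "u = liftT x0 y"
    have u: "\<bar>u\<bar> < \<epsilon>" using A_lift[OF True] by (simp add: u_def)
    have "G x y = e2ennreal (Wbar W (d - u) + ereal Bw)"
      using Wbar_arc[OF W_per, of x y x0] by (simp add: G_def d_def u_def)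
    also have "\<dots> = ennreal (h u)" using ni[of u] u by (simp add: G_fin h_def)
    finally have "G x y = ennreal (h u)" .
    moreover have "h u \<le> \<alpha> + \<beta> * u + \<gamma> * u\<^sup>2" using u by (intro chord) (simp add: abs_less_iff less_imp_le)
    ultimately show ?thesis using True by (simp add: \<phi>_def u_def ennreal_leI)
  qed (simp add: \<phi>_def)
  have phinn: "0 \<le> \<phi> y" for y
  proof (cases "y \<in> A")
    case True
    define u where "u = liftT x0 y"
    have u: "\<bar>u\<bar> < \<epsilon>" using A_lift[OF True] by (simp add: u_def)
    have "0 \<le> h u" using hnn[of u] u by simp
    also have "h u \<le> \<alpha> + \<beta> * u + \<gamma> * u\<^sup>2" using u by (intro chord) (simp add: abs_less_iff less_imp_le)
    finally show ?thesis using True by (simp add: \<phi>_def u_def)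
  qed (simp add: \<phi>_def)
  have phi_eq: "\<phi> = (\<lambda>y. \<alpha> * indicator A y + \<beta> * (indicator A y * liftT x0 y) + \<gamma> * (indicator A y * (liftT x0 y)\<^sup>2))"
    by (auto simp: \<phi>_def algebra_simps)
  have phi_int: "integrable \<rho> \<phi>"
    unfolding phi_eq using int_ind int_l1 int_l2 by simp
  have phi_val: "(\<integral>y. \<phi> y \<partial>\<rho>) = m1 * Ga + m2 * Gb - C1 / 2 * k0"
  proof -
    have "(\<integral>y. \<phi> y \<partial>\<rho>) = \<alpha> * P0 + \<beta> * P1 + \<gamma> * P2"
      unfolding phi_eq using int_ind int_l1 int_l2 by (simp add: P0_def P1_def P2_def)
    also have "\<dots> = m1 * Ga + m2 * Gb - C1 / 2 * k0"
    proof -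
      have e0: "P0 = m1 + m2" using mom0 by simp
      have e2: "P2 = \<epsilon>\<^sup>2 * (m1 + m2) - k0" using k0_eq e0 by simp
      have e1: "\<beta> * P1 = (Gb - Ga) * (m2 - m1) / 2"
        unfolding mom1 \<beta>_def using eps by (simp add: field_simps)
      show ?thesis unfolding e1 e0 e2 \<alpha>_def \<gamma>_def
        by (simp add: field_simps power2_eq_square)
    qed
    finally show ?thesis .
  qed
  show "0 \<le> m1 * Ga + m2 * Gb - C1 / 2 * k0"
    using integral_nonneg_AE[of \<phi> \<rho>] phinn phi_val by simp
  have "(\<integral>\<^sup>+ y. indicator A y * G x y \<partial>\<rho>) \<le> (\<integral>\<^sup>+ y. ennreal (\<phi> y) \<partial>\<rho>)"
    by (intro nn_integral_mono pw)
  also have "\<dots> = ennreal (\<integral>y. \<phi> y \<partial>\<rho>)"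
    by (rule nn_integral_eq_integral[OF phi_int]) (simp add: phinn)
  finally show "(\<integral>\<^sup>+ y. indicator A y * G x y \<partial>\<rho>) \<le> ennreal (m1 * Ga + m2 * Gb - C1 / 2 * k0)"
    using phi_val by simp
qed

end

context L begin

lemma Gm[measurable]: "(\<lambda>y. G x y) \<in> borel_measurable borel"
  unfolding G_def by measurable

lemma Gm'[measurable]: "G x \<in> borel_measurable borel"
  using Gm[of x] by simp

lemma V_eq:
  assumes "isTprob M"
  shows "VU U W M x = ereal (U x - Bw) + enn2ereal (\<integral>\<^sup>+ y. G x y \<partial>M)"
proof -
  have "convT W M x = enn2ereal (\<integral>\<^sup>+ y. G x y \<partial>M) - ereal Bw"
    unfolding G_def
    by (rule conv_shift) (use assms Bw Wlow Wbm in \<open>auto simp: isTprob_def\<close>)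
  then show ?thesis unfolding VU_def
    by (cases "enn2ereal (\<integral>\<^sup>+ y. G x y \<partial>M)") (auto simp: algebra_simps)
qed

lemma V_per: "VU U W M (x + of_int k) = VU U W M x"
proof -
  have "U (x + of_int k) = U x" by (rule W_int_per[OF U_per])
  moreover have "Wbar W (x + of_int k - y) = Wbar W (x - y)" for y
    using Wbar_per[OF W_per, of "x - y" k] by (simp add: algebra_simps)
  ultimately show ?thesis unfolding VU_def convT_def by simp
qed

definition "Jr x = (\<integral>\<^sup>+ y. indicator (- A) y * G x y \<partial>\<rho>)"
definition "J x = (\<integral>\<^sup>+ y. indicator A y * G x y \<partial>\<rho>)"

lemma I_split: "(\<integral>\<^sup>+ y. G x y \<partial>\<rho>) = Jr x + J x"
proof -
  have "(\<integral>\<^sup>+ y. G x y \<partial>\<rho>) = (\<integral>\<^sup>+ y. indicator (- A) y * G x y + indicator A y * G x y \<partial>\<rho>)"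
    by (intro nn_integral_cong) (simp split: split_indicator)
  also have "\<dots> = Jr x + J x" unfolding Jr_def J_def
    by (rule nn_integral_add) simp_all
  finally show ?thesis .
qed

lemma Imu_split:
  assumes lam: "0 \<le> lam" "lam \<le> 1"
  shows "(\<integral>\<^sup>+ y. G x y \<partial>mu lam) = Jr x + ennreal (1 - lam) * J x + ennreal (lam * m1) * G x pa + ennreal (lam * m2) * G x pb"
proof -
  have "(\<integral>\<^sup>+ y. ennreal (1 - lam * indicator A y) * G x y \<partial>\<rho>)
      = (\<integral>\<^sup>+ y. indicator (- A) y * G x y + ennreal (1 - lam) * (indicator A y * G x y) \<partial>\<rho>)"
    by (intro nn_integral_cong) (simp split: split_indicator)
  also have "\<dots> = Jr x + (\<integral>\<^sup>+ y. ennreal (1 - lam) * (indicator A y * G x y) \<partial>\<rho>)"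
    unfolding Jr_def by (rule nn_integral_add) simp_all
  also have "(\<integral>\<^sup>+ y. ennreal (1 - lam) * (indicator A y * G x y) \<partial>\<rho>) = ennreal (1 - lam) * J x"
    unfolding J_def by (rule nn_integral_cmult) simp
  finally show ?thesis using nn_integral_mu[OF Gm', of lam x] by simp
qed

lemma Imu_ge:
  assumes lam: "0 \<le> lam" "lam \<le> 1"
  shows "(\<integral>\<^sup>+ y. G x y \<partial>mu lam) \<ge> ennreal (1 - lam) * (\<integral>\<^sup>+ y. G x y \<partial>\<rho>)"
proof -
  have "ennreal (1 - lam) * (\<integral>\<^sup>+ y. G x y \<partial>\<rho>) = ennreal (1 - lam) * Jr x + ennreal (1 - lam) * J x"
    by (simp add: I_split distrib_left)
  also have "ennreal (1 - lam) * Jr x \<le> Jr x"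
    using mult_right_mono[of "ennreal (1 - lam)" 1 "Jr x"] lam by (simp add: ennreal_le_1)
  then have "ennreal (1 - lam) * Jr x + ennreal (1 - lam) * J x \<le> Jr x + ennreal (1 - lam) * J x"
    by (rule add_right_mono)
  also have "\<dots> \<le> (\<integral>\<^sup>+ y. G x y \<partial>mu lam)"
    unfolding Imu_split[OF lam] by (simp add: add.assoc)
  finally show ?thesis .
qed

lemma Imu_out:
  assumes lam: "0 \<le> lam" "lam \<le> 1" and xo: "\<bar>liftT x0 x\<bar> > \<epsilon>"
  shows "(\<integral>\<^sup>+ y. G x y \<partial>mu lam) \<ge> (\<integral>\<^sup>+ y. G x y \<partial>\<rho>) + ennreal (lam * (C1 / 2 * k0))"
proof -
  define Ga where "Ga = W (x - x0 + \<epsilon>) + Bw"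
  define Gb where "Gb = W (x - x0 - \<epsilon>) + Bw"
  define \<kappa> where "\<kappa> = C1 / 2 * k0"
  have co: "G x pa = ennreal Ga" "G x pb = ennreal Gb" "0 \<le> Ga" "0 \<le> Gb"
      "J x \<le> ennreal (m1 * Ga + m2 * Gb - \<kappa>)" "0 \<le> m1 * Ga + m2 * Gb - \<kappa>"
    using conv_outside[OF xo] by (simp_all add: Ga_def Gb_def \<kappa>_def J_def)
  have kp: "0 \<le> \<kappa>" using C1 k0_pos by (simp add: \<kappa>_def)
  obtain j where j: "J x = ennreal j" "0 \<le> j"
    using co(5) by (cases "J x") (auto simp: top_unique)
  have jle: "j \<le> m1 * Ga + m2 * Gb - \<kappa>"
  proof -
    have "ennreal j \<le> ennreal (m1 * Ga + m2 * Gb - \<kappa>)" using co(5) j by simp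
    then show ?thesis using co(6) by (simp add: ennreal_le_iff)
  qed
  have "(\<integral>\<^sup>+ y. G x y \<partial>\<rho>) + ennreal (lam * \<kappa>) = Jr x + ennreal (j + lam * \<kappa>)"
    using j kp lam by (simp add: I_split ennreal_plus add.assoc)
  also have "ennreal (j + lam * \<kappa>) \<le> ennreal ((1 - lam) * j + lam * m1 * Ga + lam * m2 * Gb)"
  proof (rule ennreal_leI)
    have "lam * (j + \<kappa>) \<le> lam * (m1 * Ga + m2 * Gb)" using jle lam by (intro mult_left_mono) auto
    then show "j + lam * \<kappa> \<le> (1 - lam) * j + lam * m1 * Ga + lam * m2 * Gb"
      by (simp add: algebra_simps)
  qed
  also have "ennreal ((1 - lam) * j + lam * m1 * Ga + lam * m2 * Gb)
      = ennreal (1 - lam) * J x + ennreal (lam * m1) * G x pa + ennreal (lam * m2) * G x pb"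
    using lam j co m_pos by (simp add: ennreal_plus ennreal_mult[symmetric] mult.assoc)
  finally show ?thesis unfolding Imu_split[OF lam] \<kappa>_def by (simp add: add.assoc add_left_mono)
qed

end

context L begin

lemma enn_mono: "a \<le> b \<Longrightarrow> enn2ereal a \<le> enn2ereal b"
  by (simp add: less_eq_ennreal.rep_eq)

lemma main:
  "\<exists>lam0>0. \<forall>lam. 0 < lam \<and> lam < lam0 \<longrightarrow>
     (\<exists>\<mu>. isTprob \<mu> \<and> (\<forall>B\<in>sets borel. measure \<mu> B = rhoLam \<rho> x0 \<epsilon> m1 m2 lam B)
          \<and> - essinfT (VU U W \<mu>) < - essinfT (VU U W \<rho>))"
proof -
  define E where "E = essinfT (VU U W \<rho>)"
  have Vlow: "ereal (Umin - Bw) \<le> VU U W \<rho> x" for x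
  proof -
    have "ereal (Umin - Bw) \<le> ereal (U x - Bw)" using Ub by simp
    also have "\<dots> \<le> ereal (U x - Bw) + enn2ereal (\<integral>\<^sup>+ y. G x y \<partial>\<rho>)"
      by (metis add.right_neutral add_left_mono enn2ereal_nonneg)
    finally show ?thesis using V_eq[OF rho] by simp
  qed
  have Elow: "ereal (Umin - Bw) \<le> E"
    unfolding E_def by (rule essinfT_geI) (simp add: Vlow)
  have Efin: "E < \<infinity>"
    unfolding E_def
  proof (rule essinfT_finite)
    have cf: "AE x in lborel. x \<in> {0..1} \<longrightarrow> (\<integral>\<^sup>+ y. G x y \<partial>\<rho>) < \<infinity>"
      unfolding G_def
      by (rule conv_fin[OF P s\<rho> conc Wm W_per Wi Bw Wlow])
    then show "AE x in lborel. x \<in> {0..1} \<longrightarrow> VU U W \<rho> x < \<infinity>"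
    proof eventually_elim
      case (elim x)
      show ?case
      proof
        assume "x \<in> {0..1}"
        then have "(\<integral>\<^sup>+ y. G x y \<partial>\<rho>) < \<infinity>" using elim by simp
        then obtain i where "(\<integral>\<^sup>+ y. G x y \<partial>\<rho>) = ennreal i" "0 \<le> i"
          by (cases "(\<integral>\<^sup>+ y. G x y \<partial>\<rho>)") auto
        then show "VU U W \<rho> x < \<infinity>" using V_eq[OF rho, of x] by simp
      qed
    qed
  qed
  obtain e where e: "E = ereal e" using Elow Efin by (cases E) auto
  have eU: "Umin - Bw \<le> e" using Elow e by simp
  define \<kappa> where "\<kappa> = C1 / 2 * k0"
  have kp: "0 < \<kappa>" using C1 k0_pos by (simp add: \<kappa>_def)
  define K where "K = e + c - (Umin - Bw)"
  have Kp: "c \<le> K" "0 < K" using eU c by (auto simp: K_def)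
  define lam0 where "lam0 = min (1/2) (c / (2 * K))"
  have l0: "0 < lam0" using c Kp by (simp add: lam0_def)
  show ?thesis
  proof (intro exI[of _ lam0] conjI allI impI l0)
    fix lam assume lam: "0 < lam \<and> lam < lam0"
    have lam1: "0 \<le> lam" "lam \<le> 1" "lam < 1/2" using lam by (auto simp: lam0_def)
    have lamK: "lam * K \<le> c / 2"
    proof -
      have "lam \<le> c / (2 * K)" using lam by (simp add: lam0_def)
      then have "lam * K \<le> c / (2 * K) * K" using Kp by (intro mult_right_mono) auto
      also have "\<dots> = c / 2" using Kp by (simp add: field_simps)
      finally show ?thesis .
    qed
    define \<delta> where "\<delta> = min (c / 2) (lam * \<kappa>)"
    have dp: "0 < \<delta>" using c kp lam by (simp add: \<delta>_def)
    define M where "M = mu lam"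
    have TM: "isTprob M" unfolding M_def by (rule isTprob_mu[OF lam1(1,2)])
    have meq: "\<forall>B\<in>sets borel. measure M B = rhoLam \<rho> x0 \<epsilon> m1 m2 lam B"
      unfolding M_def using measure_mu[OF lam1(1,2)] by blast
    define Z where "Z = range (\<lambda>k::int. x0 + \<epsilon> + of_int k) \<union> range (\<lambda>k::int. x0 - \<epsilon> + of_int k)"
    have Zc: "countable Z" unfolding Z_def by simp
    have Zsub: "x \<in> Z" if "\<bar>liftT x0 x\<bar> = \<epsilon>" for x
    proof -
      have xd: "x = x0 + liftT x0 x + of_int (round (x - x0))" by (rule lift_decomp)
      show ?thesis
      proof (cases "liftT x0 x = \<epsilon>")
        case True
        then show ?thesis using xd unfolding Z_def by (intro UnI1) (auto intro!: image_eqI[where x="round (x - x0)"])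
      next
        case False
        then have "liftT x0 x = - \<epsilon>" using that by auto
        then show ?thesis using xd unfolding Z_def by (intro UnI2) (auto intro!: image_eqI[where x="round (x - x0)"])
      qed
    qed
    have aeZ: "AE x in lborel. x \<notin> Z"
      by (intro AE_not_in countable_imp_null_set_lborel Zc)
    have ae: "AE x in lborel. x \<in> {0..1} \<longrightarrow> ereal (e + \<delta>) \<le> VU U W M x"
      using essinfT_AE_le[of "VU U W \<rho>"] aeZ
    proof eventually_elim
      case (elim x)
      show ?case
      proof
        assume x01: "x \<in> {0..1}"
        have VE: "ereal e \<le> VU U W \<rho> x" using elim x01 e by (simp add: E_def)
        have Vr: "VU U W \<rho> x = ereal (U x - Bw) + enn2ereal (\<integral>\<^sup>+ y. G x y \<partial>\<rho>)" by (rule V_eq[OF rho])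
        have Vm: "VU U W M x = ereal (U x - Bw) + enn2ereal (\<integral>\<^sup>+ y. G x y \<partial>M)" by (rule V_eq[OF TM])
        show "ereal (e + \<delta>) \<le> VU U W M x"
        proof (cases "\<bar>liftT x0 x\<bar> > \<epsilon>")
          case True
          have "(\<integral>\<^sup>+ y. G x y \<partial>\<rho>) + ennreal (lam * \<kappa>) \<le> (\<integral>\<^sup>+ y. G x y \<partial>M)"
            unfolding M_def \<kappa>_def by (rule Imu_out[OF lam1(1,2) True])
          then have "enn2ereal (\<integral>\<^sup>+ y. G x y \<partial>\<rho>) + ereal (lam * \<kappa>) \<le> enn2ereal (\<integral>\<^sup>+ y. G x y \<partial>M)"
            using enn_mono lam kp by (fastforce simp: plus_ennreal.rep_eq)
          then have "VU U W \<rho> x + ereal (lam * \<kappa>) \<le> VU U W M x"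
            unfolding Vr Vm by (metis add.assoc add_left_mono)
          moreover have "ereal e + ereal (lam * \<kappa>) \<le> VU U W \<rho> x + ereal (lam * \<kappa>)"
            using VE by (rule add_right_mono)
          moreover have "ereal (e + \<delta>) \<le> ereal e + ereal (lam * \<kappa>)"
            by (simp add: \<delta>_def)
          ultimately show ?thesis by (meson order_trans)
        next
          case False
          then have le: "\<bar>liftT x0 x\<bar> \<le> \<epsilon>" by simp
          have lneq: "\<bar>liftT x0 x\<bar> \<noteq> \<epsilon> \<or> True" by simp
          define x' where "x' = x0 + liftT x0 x"
          have x'i: "x' \<in> {x0 - \<epsilon>..x0 + \<epsilon>}" using le by (auto simp: x'_def abs_le_iff)
          have "x = x' + of_int (round (x - x0))" using lift_decomp[of x x0] by (simp add: x'_def)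
          then have "VU U W \<rho> x = VU U W \<rho> x'" using V_per[of \<rho> x' "round (x - x0)"] by simp
          also have "\<dots> \<ge> E + ereal c" using gap x'i by (simp add: E_def)
          finally have Vc: "ereal (e + c) \<le> VU U W \<rho> x" using e by simp
          have Ige: "ennreal (1 - lam) * (\<integral>\<^sup>+ y. G x y \<partial>\<rho>) \<le> (\<integral>\<^sup>+ y. G x y \<partial>M)"
            unfolding M_def by (rule Imu_ge[OF lam1(1,2)])
          show ?thesis
          proof (cases "(\<integral>\<^sup>+ y. G x y \<partial>\<rho>) = \<top>")
            case True
            have "ennreal (1 - lam) * \<top> = \<top>" using lam1 by (simp add: ennreal_mult_top)
            then have "(\<integral>\<^sup>+ y. G x y \<partial>M) = \<top>" using Ige True by (simp add: top_unique)
            then show ?thesis using Vm by simp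
          next
            case False
            then obtain i where i: "(\<integral>\<^sup>+ y. G x y \<partial>\<rho>) = ennreal i" "0 \<le> i"
              by (cases "(\<integral>\<^sup>+ y. G x y \<partial>\<rho>)") (auto simp: top_unique)
            have ri: "e + c \<le> U x - Bw + i" using Vc Vr i by simp
            have "ennreal ((1 - lam) * i) \<le> (\<integral>\<^sup>+ y. G x y \<partial>M)"
              using Ige i lam1 by (simp add: ennreal_mult)
            then have "ereal ((1 - lam) * i) \<le> enn2ereal (\<integral>\<^sup>+ y. G x y \<partial>M)"
              using enn_mono lam1 i by fastforce
            then have Vmi: "ereal (U x - Bw + (1 - lam) * i) \<le> VU U W M x"
              unfolding Vm by (metis add_left_mono plus_ereal.simps(1))
            have a1: "(1 - lam) * (e + c - U x + Bw) \<le> (1 - lam) * i"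
              using ri lam1 by (intro mult_left_mono) auto
            have a2: "lam * (U x - Umin) \<ge> 0" using Ub lam1 by simp
            have "e + \<delta> \<le> e + c / 2" by (simp add: \<delta>_def)
            also have "e + c / 2 \<le> U x - Bw + (1 - lam) * i"
              using a1 a2 lamK unfolding K_def by (simp add: algebra_simps)
            finally show ?thesis using Vmi by (meson ereal_less_eq(3) order_trans)
          qed
        qed
      qed
    qed
    have "ereal (e + \<delta>) \<le> essinfT (VU U W M)" by (rule essinfT_geI[OF ae])
    then have "- essinfT (VU U W M) < - E" using dp e by (cases "essinfT (VU U W M)") auto
    then show "\<exists>\<mu>. isTprob \<mu> \<and> (\<forall>B\<in>sets borel. measure \<mu> B = rhoLam \<rho> x0 \<epsilon> m1 m2 lam B)
          \<and> - essinfT (VU U W \<mu>) < - essinfT (VU U W \<rho>)"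
      using TM meq unfolding E_def by blast
  qed
qed

end

theorem lemma3p4:
  fixes W U :: "real \<Rightarrow> real" and \<rho> :: "real measure"
    and x0 \<epsilon> c m1 m2 :: real
  assumes W_per: "\<forall>x. W (x + 1) = W x"
    and H1_L1: "set_integrable lborel {0..1} W"
    and H1_mean: "(LBINT x:{0..1}. W x) = 0"
    and H1_H4_C2: "\<exists>W' W'' C1. C1 > 0 \<and> (\<forall>x. x \<notin> \<int> \<longrightarrow>
              (W has_real_derivative W' x) (at x) \<and> (W' has_real_derivative W'' x) (at x)
              \<and> isCont W'' x \<and> W'' x \<ge> C1)"
    and H2: "\<forall>x. W (- x) = W x"
    and H3: "filterlim W at_top (at 0)"
    and U_per: "\<forall>x. U (x + 1) = U x"
    and U_bdd: "\<exists>b. \<forall>x. U x \<ge> b"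
    and rho: "isTprob \<rho>"
    and eps: "0 < \<epsilon>" "\<epsilon> < 1/2"
    and c: "c > 0"
    and gap: "\<forall>x\<in>{x0 - \<epsilon>..x0 + \<epsilon>}. VU U W \<rho> x \<ge> essinfT (VU U W \<rho>) + ereal c"
    and supp: "\<exists>x\<in>suppT \<rho>. \<bar>liftT x0 x\<bar> < \<epsilon> / 2"
    and m_pos: "m1 > 0" "m2 > 0"
    and moments: "\<forall>k\<in>{0, 1::nat}.
              m1 * (- \<epsilon>) ^ k + m2 * \<epsilon> ^ k - (\<integral>u. u ^ k \<partial>(tauT \<rho> x0 \<epsilon>)) = 0"
  shows "\<exists>lam0>0. \<forall>lam. 0 < lam \<and> lam < lam0 \<longrightarrow>
           (\<exists>\<mu>. isTprob \<mu> \<and> (\<forall>B\<in>sets borel. measure \<mu> B = rhoLam \<rho> x0 \<epsilon> m1 m2 lam B)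
                \<and> - essinfT (VU U W \<mu>) < - essinfT (VU U W \<rho>))"
proof -
  obtain W' W'' C1 where C1: "C1 > 0" and D: "\<forall>x. x \<notin> \<int> \<longrightarrow>
              (W has_real_derivative W' x) (at x) \<and> (W' has_real_derivative W'' x) (at x)
              \<and> isCont W'' x \<and> W'' x \<ge> C1"
    using H1_H4_C2 by blast
  have D0: "\<forall>x. x \<notin> \<int> \<longrightarrow> (W has_real_derivative W' x) (at x) \<and> (W' has_real_derivative W'' x) (at x) \<and> W'' x \<ge> 0"
    using D C1 by force
  obtain Bw where Bw: "0 \<le> Bw" "\<forall>t. t \<notin> \<int> \<longrightarrow> W t \<ge> - Bw"
    using W_lower[OF W_per D0] by blast
  obtain Umin where Umin: "\<forall>x. U x \<ge> Umin" using U_bdd by blast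
  have D1: "\<forall>x. x \<notin> \<int> \<longrightarrow> (W has_real_derivative W' x) (at x) \<and> (W' has_real_derivative W'' x) (at x) \<and> W'' x \<ge> C1"
    using D by blast
  interpret L W U \<rho> x0 \<epsilon> c m1 m2 W' W'' C1 Bw Umin
    by (unfold_locales) (use W_per H1_L1 D1 C1 Bw U_per Umin rho eps c gap supp m_pos moments in auto)
  show ?thesis by (rule main)
qed

end
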